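(* Let $0<\alpha\le1$ and let $f=f(t,v)$, $u=u(t,v)$ satisfy $f(t,v)\ge0$ and $u(0,v)\le0$ for $t>0$ and almost all $v\in\mathbb{R}^3$. Assume that for some $0<R<\infty$ and all $t>0$, $$\partial_t u-Q(f,u)\le0\ \text{ on } \{|v|>R\},\qquad u\le0\ \text{ on } \{0\le|v|\le R\}.$$ Then $u\le0$ for $t>0$ and almost all $v\in\mathbb{R}^3$.
   Context: $\beta=\frac{1+\alpha}{2}$, $\mathbb{S}^2_+$ a hemisphere, and for $v,v_*\in\mathbb{R}^3$, $n\in\mathbb{S}^2_+$, $v'=v-\beta((v-v_* )\cdot n)n$. The (hard-sphere, inelastic with restitution coefficient $\alpha$) collision operator $Q(f,g)$ is defined by the weak form $$\int_{\mathbb{R}^3}Q(f,g)(v)\phi(v)\,dv=\int_{\mathbb{R}^3}\int_{\mathbb{R}^3}\int_{\mathbb{S}^2_+}|(v-v_* )\cdot n|\,f(v_* )g(v)\,(\phi(v')-\phi(v))\,dn\,dv_*\,dv$$ for test functions $\phi$; equivalently $Q(f,g)=Q^+(f,g)-g\,Lf$ with $Lf(v)=\pi\int|v-v_*|f(v_* )\,dv_*$ and $Q^+(f,g)(v)=\alpha^{-2}\int\int_{\mathbb{S}^2_+}|(v-v_* )\cdot n|f({}'v_* )g({}'v)\,dn\,dv_*$, where ${}'v=v-\gamma((v-v_* )\cdot n)n$, ${}'v_*=v_*+\gamma((v-v_* )\cdot n)n$, $\gamma=\frac12(1+\frac1\alpha)$. Functions are assumed regular enough for these expressions to make sense. *)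

theory Defs
  imports "HOL-Analysis.Analysis"
begin

text \<open>Surface measure on the hemisphere S^2_+ = {n. norm n = 1, n$1 > 0} of the unit
  sphere in R^3, realised via the cone construction: sigma(A) = 3 * lambda({r x. 0<r<=1, x in A}),
  i.e. the push-forward of 3 times Lebesgue measure on the half unit ball under x -> x/|x|.
  Total mass = 2 pi.\<close>
definition hemisphere_measure :: "(real^3) measure" where
  "hemisphere_measure =
     distr (density lborel
              (\<lambda>x. ennreal 3 * indicator {x :: real^3. 0 < norm x \<and> norm x \<le> 1 \<and> 0 < x $ 1} x))
           borel (\<lambda>x. x /\<^sub>R norm x)"

definition post_vel :: "real \<Rightarrow> real^3 \<Rightarrow> real^3 \<Rightarrow> real^3 \<Rightarrow> real^3" where
  "post_vel \<alpha> v vs n = v - ((1 + \<alpha>) / 2) *\<^sub>R (((v - vs) \<bullet> n) *\<^sub>R n)"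

definition Q_weak_rhs :: "real \<Rightarrow> (real^3 \<Rightarrow> real) \<Rightarrow> (real^3 \<Rightarrow> real) \<Rightarrow> (real^3 \<Rightarrow> real) \<Rightarrow> real" where
  "Q_weak_rhs \<alpha> f g \<phi> =
     (\<integral>v. (\<integral>vs. (\<integral>n. \<bar>(v - vs) \<bullet> n\<bar> * f vs * g v * (\<phi> (post_vel \<alpha> v vs n) - \<phi> v)
        \<partial>hemisphere_measure) \<partial>lborel) \<partial>lborel)"

definition is_Q :: "real \<Rightarrow> (real^3 \<Rightarrow> real) \<Rightarrow> (real^3 \<Rightarrow> real) \<Rightarrow> (real^3 \<Rightarrow> real) \<Rightarrow> bool" where
  "is_Q \<alpha> f g q \<longleftrightarrow>
     integrable lborel q \<and>
     (\<forall>\<phi> :: real^3 \<Rightarrow> real. \<phi> \<in> borel_measurable borel \<longrightarrow> bounded (range \<phi>) \<longrightarrow>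
        (\<integral>v. q v * \<phi> v \<partial>lborel) = Q_weak_rhs \<alpha> f g \<phi>)"

end

theory Submission imports Defs begin


definition pp :: "real \<Rightarrow> real" where "pp x = (max 0 x)^2"

lemma pp_deriv: "(pp has_real_derivative 2 * max 0 x) (at x)"
proof (cases "x = 0")
  case True
  have "((\<lambda>y. (pp y - pp 0) / (y - 0)) \<longlongrightarrow> 0) (at 0)"
  proof (rule tendsto_sandwich[where f="\<lambda>y. - \<bar>y\<bar>" and h="\<lambda>y. \<bar>y\<bar>"])
    show "\<forall>\<^sub>F y in at 0. - \<bar>y\<bar> \<le> (pp y - pp 0) / (y - 0)"
      by (auto simp: pp_def max_def power2_eq_square divide_simps intro!: always_eventually)
    show "\<forall>\<^sub>F y in at 0. (pp y - pp 0) / (y - 0) \<le> \<bar>y\<bar>"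
      by (auto simp: pp_def max_def power2_eq_square divide_simps intro!: always_eventually)
    show "((\<lambda>y. - \<bar>y\<bar>) \<longlongrightarrow> 0) (at (0::real))"
      using tendsto_rabs[OF tendsto_ident_at[of 0 UNIV]] tendsto_minus by fastforce
    show "((\<lambda>y. \<bar>y\<bar>) \<longlongrightarrow> 0) (at (0::real))"
      using tendsto_rabs[OF tendsto_ident_at[of 0 UNIV]] by simp
  qed
  then show ?thesis using True by (simp add: DERIV_def)
next
  case False
  show ?thesis
  proof (cases "x > 0")
    case True
    have "((\<lambda>y. y^2) has_real_derivative 2 * max 0 x) (at x)"
      using True by (auto intro!: derivative_eq_intros)
    then show ?thesis
      apply (rule has_field_derivative_transform_within_open[where S="{0<..}"])
      using True by (auto simp: pp_def)
  next
    case F2: False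
    then have "x < 0" using False by auto
    have "((\<lambda>y. 0) has_real_derivative 2 * max 0 x) (at x)"
      using \<open>x < 0\<close> by (auto intro!: derivative_eq_intros)
    then show ?thesis
      apply (rule has_field_derivative_transform_within_open[where S="{..<0}"])
      using \<open>x < 0\<close> by (auto simp: pp_def)
  qed
qed

lemma pp_cont: "continuous_on S pp"
  unfolding pp_def by (intro continuous_intros)

definition psi :: "nat \<Rightarrow> real \<Rightarrow> real" where
  "psi m x = real m / 2 * (pp x - pp (x - 1 / real m))"
definition dpsi :: "nat \<Rightarrow> real \<Rightarrow> real" where
  "dpsi m x = real m * (max 0 x - max 0 (x - 1 / real m))"

lemma psi_deriv: "(psi m has_real_derivative dpsi m x) (at x)"
proof -
  have "((\<lambda>x. pp (x - 1 / real m)) has_real_derivative 2 * max 0 (x - 1/real m) * 1) (at x)"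
    by (rule DERIV_chain2[OF pp_deriv]) (auto intro!: derivative_eq_intros)
  from DERIV_cmult[OF DERIV_diff[OF pp_deriv this], of "real m / 2"]
  show ?thesis unfolding psi_def[abs_def] dpsi_def by (simp add: algebra_simps)
qed

lemma psi_cont: "continuous_on S (psi m)"
  unfolding psi_def[abs_def] pp_def by (intro continuous_intros)

lemma dpsi_bound: assumes "m > 0" shows "\<bar>dpsi m x\<bar> \<le> 1"
proof -
  define c where "c = 1 / real m"
  have c: "c > 0" "real m * c = 1" using assms by (auto simp: c_def)
  have a: "0 \<le> max 0 x - max 0 (x - c)" "max 0 x - max 0 (x - c) \<le> c" using c by (simp_all add: max_def)
  have b: "0 \<le> real m * (max 0 x - max 0 (x - c))" using a by simp
  have d: "real m * (max 0 x - max 0 (x - c)) \<le> real m * c"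
    by (rule mult_left_mono[OF a(2)]) simp
  have "\<bar>real m * (max 0 x - max 0 (x - c))\<bar> \<le> 1" using b d c(2) by (simp add: abs_le_iff)
  then show ?thesis unfolding c_def dpsi_def .
qed

lemma psi_zero: assumes "x \<le> 0" shows "psi m x = 0"
proof -
  have "0 \<le> 1 / real m" by simp
  then have "x - 1 / real m \<le> 0" using assms by linarith
  then show ?thesis using assms unfolding psi_def pp_def by simp
qed

lemma dpsi_zero: assumes "x \<le> 0" shows "dpsi m x = 0"
proof -
  have "0 \<le> 1 / real m" by simp
  then have "x - 1 / real m \<le> 0" using assms by linarith
  then show ?thesis using assms unfolding dpsi_def by simp
qed

lemma dpsi_lim: "(\<lambda>i. dpsi (Suc i) x) \<longlonglongrightarrow> (if 0 < x then 1 else 0)"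
proof (cases "0 < x")
  case True
  obtain N :: nat where N: "1 / x < N" using reals_Archimedean2 by blast
  have "eventually (\<lambda>i. dpsi (Suc i) x = 1) sequentially"
    unfolding eventually_sequentially
  proof (intro exI allI impI)
    fix i assume "N \<le> i"
    then have "1 / x < real (Suc i)" using N by linarith
    then have "1 / real (Suc i) < x" using True
      by (simp add: field_simps)
    then show "dpsi (Suc i) x = 1" using True unfolding dpsi_def by (simp add: field_simps)
  qed
  then show ?thesis using True by (simp add: tendsto_eventually)
next
  case False
  then show ?thesis by (simp add: dpsi_zero)
qed

lemma psi_lim: "(\<lambda>i. psi (Suc i) x) \<longlonglongrightarrow> max 0 x"
proof (cases "0 < x")
  case True
  obtain N :: nat where N: "1 / x < N" using reals_Archimedean2 by blast
  have ev: "eventually (\<lambda>i. x - inverse (real (Suc i)) / 2 = psi (Suc i) x) sequentially"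
    unfolding eventually_sequentially
  proof (intro exI allI impI)
    fix i assume "N \<le> i"
    then have "1 / x < real (Suc i)" using N by linarith
    then have "1 / real (Suc i) < x" using True
      by (simp add: field_simps)
    define c where "c = 1 / real (Suc i)"
    have c: "real (Suc i) * c = 1" "c > 0" "c < x" using \<open>1 / real (Suc i) < x\<close> by (auto simp: c_def)
    have "psi (Suc i) x = real (Suc i) / 2 * (x^2 - (x - c)^2)"
      unfolding psi_def pp_def c_def[symmetric] using c True by simp
    also have "\<dots> = (real (Suc i) * c) * x - (real (Suc i) * c) * c / 2"
      by (simp add: power2_eq_square field_simps)
    finally have "psi (Suc i) x = x - c / 2" using c(1) by simp
    moreover have "inverse (real (Suc i)) = c" unfolding c_def by (simp add: inverse_eq_divide)
    ultimately show "x - inverse (real (Suc i)) / 2 = psi (Suc i) x" by simp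
  qed
  have "(\<lambda>i. x - inverse (real (Suc i)) / 2) \<longlonglongrightarrow> x - 0 / 2"
    by (intro tendsto_intros LIMSEQ_inverse_real_of_nat) auto
  then have "(\<lambda>i. x - inverse (real (Suc i)) / 2) \<longlonglongrightarrow> max 0 x" using True by simp
  then show ?thesis using ev by (rule Lim_transform_eventually)
next
  case False
  then show ?thesis by (simp add: psi_zero)
qed



lemma oneD:
  fixes h h' :: "real \<Rightarrow> real" and t B :: real
  assumes t: "0 < t" and contf: "continuous_on {0..t} h"
    and der: "\<And>s. s \<in> {0<..<t} \<Longrightarrow> (h has_real_derivative h' s) (at s)"
    and bd: "\<And>s. s \<in> {0..t} \<Longrightarrow> \<bar>h' s\<bar> \<le> B"
    and mh: "h \<in> borel_measurable borel" and mh': "h' \<in> borel_measurable borel"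
    and h0: "h 0 \<le> 0"
  shows "max 0 (h t) = (\<integral>s. indicator {0..t} s * (if 0 < h s then h' s else 0) \<partial>lborel)"
proof -
  define G where "G i s = indicator {0..t} s * (dpsi (Suc i) (h s) * h' s)" for i s
  define W where "W s = indicator {0..t} s * B" for s
  define F where "F s = indicator {0..t} s * (if 0 < h s then h' s else 0)" for s
  have mG: "G i \<in> borel_measurable lborel" for i
  proof -
    have "dpsi (Suc i) \<in> borel_measurable borel"
      unfolding dpsi_def[abs_def] by measurable
    then show ?thesis unfolding G_def using mh mh' by measurable
  qed
  have mF: "F \<in> borel_measurable lborel"
    unfolding F_def using mh mh' by measurable
  have iW: "integrable lborel W"
    using borel_integrable_atLeastAtMost'[of 0 t "\<lambda>_. B"]
    unfolding W_def set_integrable_def by (simp add: mult.commute)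
  have lim: "AE s in lborel. (\<lambda>i. G i s) \<longlonglongrightarrow> F s"
  proof (intro AE_I2)
    fix s
    have "(\<lambda>i. dpsi (Suc i) (h s) * h' s) \<longlonglongrightarrow> (if 0 < h s then 1 else 0) * h' s"
      by (rule tendsto_mult[OF dpsi_lim tendsto_const])
    then have "(\<lambda>i. indicator {0..t} s * (dpsi (Suc i) (h s) * h' s)) \<longlonglongrightarrow> indicator {0..t} s * ((if 0 < h s then 1 else 0) * h' s)"
      by (rule tendsto_mult[OF tendsto_const])
    then show "(\<lambda>i. G i s) \<longlonglongrightarrow> F s" unfolding G_def F_def by (cases "0 < h s") auto
  qed
  have bound: "AE s in lborel. norm (G i s) \<le> W s" for i
  proof (intro AE_I2)
    fix s
    show "norm (G i s) \<le> W s"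
    proof (cases "s \<in> {0..t}")
      case True
      have "\<bar>dpsi (Suc i) (h s)\<bar> * \<bar>h' s\<bar> \<le> 1 * B"
        by (intro mult_mono dpsi_bound bd True) auto
      then show ?thesis using True by (simp add: G_def W_def abs_mult)
    qed (simp add: G_def W_def)
  qed
  have L1: "(\<lambda>i. integral\<^sup>L lborel (G i)) \<longlonglongrightarrow> integral\<^sup>L lborel F"
    by (rule integral_dominated_convergence[OF mF mG iW lim bound])
  have iG: "integrable lborel (G i)" for i
    by (rule integrable_dominated_convergence2[OF mF mG iW lim bound])
  have eq: "integral\<^sup>L lborel (G i) = psi (Suc i) (h t)" for i
  proof -
    have "((\<lambda>s. dpsi (Suc i) (h s) * h' s) has_integral (psi (Suc i) (h t) - psi (Suc i) (h 0))) {0..t}"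
    proof (rule fundamental_theorem_of_calculus_interior)
      show "0 \<le> t" using t by simp
      show "continuous_on {0..t} (\<lambda>s. psi (Suc i) (h s))"
        by (rule continuous_on_compose2[OF psi_cont contf]) auto
      fix s assume "s \<in> {0<..<t}"
      have "((\<lambda>s. psi (Suc i) (h s)) has_real_derivative dpsi (Suc i) (h s) * h' s) (at s)"
        by (rule DERIV_chain2[OF psi_deriv der[OF \<open>s \<in> {0<..<t}\<close>]])
      then show "((\<lambda>s. psi (Suc i) (h s)) has_vector_derivative dpsi (Suc i) (h s) * h' s) (at s)"
        by (simp add: has_real_derivative_iff_has_vector_derivative)
    qed
    then have "((\<lambda>s. dpsi (Suc i) (h s) * h' s) has_integral psi (Suc i) (h t)) {0..t}"
      using psi_zero[OF h0] by simp
    then have "((\<lambda>s. if s \<in> {0..t} then dpsi (Suc i) (h s) * h' s else 0) has_integral psi (Suc i) (h t)) UNIV"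
      by (simp only: has_integral_restrict_UNIV)
    moreover have "(\<lambda>s. if s \<in> {0..t} then dpsi (Suc i) (h s) * h' s else 0) = G i"
      by (auto simp: G_def fun_eq_iff indicator_def)
    ultimately have "(G i has_integral psi (Suc i) (h t)) UNIV" by simp
    moreover have "(G i has_integral integral\<^sup>L lborel (G i)) UNIV"
      by (rule has_integral_integral_lborel[OF iG])
    ultimately show ?thesis using has_integral_unique by blast
  qed
  have "(\<lambda>i. psi (Suc i) (h t)) \<longlonglongrightarrow> integral\<^sup>L lborel F"
    using L1 unfolding eq .
  moreover have "(\<lambda>i. psi (Suc i) (h t)) \<longlonglongrightarrow> max 0 (h t)" by (rule psi_lim)
  ultimately show ?thesis unfolding F_def using LIMSEQ_unique by blast
qed



lemma int_nonpos_AE: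
  fixes g :: "'a \<Rightarrow> real"
  assumes "AE x in M. g x \<le> 0"
  shows "integral\<^sup>L M g \<le> 0"
proof -
  have "0 \<le> integral\<^sup>L M (\<lambda>x. - g x)"
    by (rule integral_nonneg_AE) (use assms in auto)
  then show ?thesis by simp
qed

lemma Q_weak_rhs_indicator_nonpos:
  fixes fs us :: "real^3 \<Rightarrow> real"
  assumes fpos: "AE v in lborel. 0 \<le> fs v"
  shows "Q_weak_rhs \<alpha> fs us (indicator {v. 0 < us v}) \<le> 0"
  unfolding Q_weak_rhs_def
proof (rule int_nonpos_AE, intro AE_I2)
  fix v :: "real^3"
  show "(\<integral>vs. (\<integral>n. \<bar>(v - vs) \<bullet> n\<bar> * fs vs * us v *
          (indicator {v. 0 < us v} (post_vel \<alpha> v vs n) - indicator {v. 0 < us v} v)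
        \<partial>hemisphere_measure) \<partial>lborel) \<le> 0"
  proof (rule int_nonpos_AE)
    show "AE vs in lborel. (\<integral>n. \<bar>(v - vs) \<bullet> n\<bar> * fs vs * us v *
          (indicator {v. 0 < us v} (post_vel \<alpha> v vs n) - indicator {v. 0 < us v} v)
        \<partial>hemisphere_measure) \<le> 0"
      using fpos
    proof eventually_elim
      case (elim vs)
      show ?case
      proof (rule int_nonpos_AE, intro AE_I2)
        fix n
        have a: "0 \<le> \<bar>(v - vs) \<bullet> n\<bar> * fs vs" using elim by simp
        have b: "us v * (indicator {v. 0 < us v} (post_vel \<alpha> v vs n) - indicator {v. 0 < us v} v) \<le> (0::real)"
          by (cases "0 < us v"; cases "0 < us (post_vel \<alpha> v vs n)")
             (auto simp: indicator_def mult_le_0_iff)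
        have "\<bar>(v - vs) \<bullet> n\<bar> * fs vs * (us v * (indicator {v. 0 < us v} (post_vel \<alpha> v vs n) - indicator {v. 0 < us v} v)) \<le> 0"
          using a b by (rule mult_nonneg_nonpos)
        then show "\<bar>(v - vs) \<bullet> n\<bar> * fs vs * us v *
          (indicator {v. 0 < us v} (post_vel \<alpha> v vs n) - indicator {v. 0 < us v} v) \<le> 0"
          by (simp add: mult.assoc)
      qed
    qed
  qed
qed

lemma Q_indicator_nonpos:
  fixes fs us qs :: "real^3 \<Rightarrow> real"
  assumes Q: "is_Q \<alpha> fs us qs" and fpos: "AE v in lborel. 0 \<le> fs v"
    and mu: "us \<in> borel_measurable borel"
  shows "(\<integral>v. qs v * indicator {v. 0 < us v} v \<partial>lborel) \<le> 0"
proof -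
  have m: "indicator {v. 0 < us v} \<in> borel_measurable (borel :: (real^3) measure)"
    using mu by measurable
  have "range (indicator {v. 0 < us v} :: real^3 \<Rightarrow> real) \<subseteq> {0, 1}"
    by (auto simp: indicator_def)
  then have bd: "bounded (range (indicator {v. 0 < us v} :: real^3 \<Rightarrow> real))"
    by (rule bounded_subset[rotated]) simp
  have "(\<integral>v. qs v * indicator {v. 0 < us v} v \<partial>lborel) = Q_weak_rhs \<alpha> fs us (indicator {v. 0 < us v})"
    using Q m bd unfolding is_Q_def by blast
  also have "\<dots> \<le> 0" by (rule Q_weak_rhs_indicator_nonpos[OF fpos])
  finally show ?thesis .
qed



theorem lemma3p1:
  fixes \<alpha> R :: real
    and f u ut q :: "real \<Rightarrow> real^3 \<Rightarrow> real"
  assumes alpha: "0 < \<alpha>" "\<alpha> \<le> 1"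
    and R: "0 < R"
    and meas_f: "(\<lambda>(t, v). f t v) \<in> borel_measurable borel"
    and meas_u: "(\<lambda>(t, v). u t v) \<in> borel_measurable borel"
    and meas_ut: "(\<lambda>(t, v). ut t v) \<in> borel_measurable borel"
    and meas_q: "(\<lambda>(t, v). q t v) \<in> borel_measurable borel"
    and cont_u: "AE v in lborel. continuous_on {0..} (\<lambda>s. u s v)"
    and deriv_u: "AE v in lborel. \<forall>t>0. ((\<lambda>s. u s v) has_real_derivative ut t v) (at t)"
    and dom_ut: "\<forall>T>0. \<exists>g. integrable lborel g \<and>
                   (AE v in lborel. \<forall>t\<in>{0<..T}. \<bar>ut t v\<bar> \<le> g v)"
    and integ: "\<forall>t>0. integrable (lborel \<Otimes>\<^sub>M lborel \<Otimes>\<^sub>M hemisphere_measure)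
                   (\<lambda>(v, vs, n). \<bar>(v - vs) \<bullet> n\<bar> * f t vs * u t v)"
    and Q: "\<forall>t>0. is_Q \<alpha> (f t) (u t) (q t)"
    and f_nonneg: "\<forall>t>0. AE v in lborel. 0 \<le> f t v"
    and u0: "AE v in lborel. u 0 v \<le> 0"
    and outer: "\<forall>t>0. AE v in lborel. R < norm v \<longrightarrow> ut t v - q t v \<le> 0"
    and inner: "\<forall>t>0. AE v in lborel. norm v \<le> R \<longrightarrow> u t v \<le> 0"
  shows "\<forall>t>0. AE v in lborel. u t v \<le> 0"
proof (intro allI impI)
  fix t :: real assume t: "0 < t"
  have [measurable]: "(\<lambda>(t, v). u t v) \<in> borel_measurable (borel \<Otimes>\<^sub>M borel)"
    using meas_u by (simp add: borel_prod)
  have [measurable]: "(\<lambda>(t, v). ut t v) \<in> borel_measurable (borel \<Otimes>\<^sub>M borel)"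
    using meas_ut by (simp add: borel_prod)
  have PSF: "pair_sigma_finite lborel lborel"
    by (simp add: pair_sigma_finite.intro sigma_finite_lborel)
  obtain g where ig: "integrable lborel g"
    and gb: "AE v in lborel. \<forall>s\<in>{0<..t}. \<bar>ut s v\<bar> \<le> g v"
    using dom_ut t by blast
  have [measurable]: "g \<in> borel_measurable lborel" using ig by auto
  define F where "F s v = (if 0 < s \<and> s \<le> t \<and> 0 < u s v then ut s v else 0)" for s v
  have mF[measurable]: "(\<lambda>(s, v). F s v) \<in> borel_measurable (lborel \<Otimes>\<^sub>M lborel)"
    unfolding F_def by measurable
  have mFs[measurable]: "F s \<in> borel_measurable lborel" for s
    unfolding F_def by measurable
  have step1: "AE v in lborel. max 0 (u t v) = (\<integral>s. F s v \<partial>lborel)"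
    using cont_u deriv_u gb u0
  proof eventually_elim
    case (elim v)
    have gv: "0 \<le> g v" using elim(3) t by force
    have "max 0 (u t v) = (\<integral>s. indicator {0..t} s * (if 0 < u s v then (if 0 < s then ut s v else 0) else 0) \<partial>lborel)"
    proof (rule oneD[where h="\<lambda>s. u s v" and h'="\<lambda>s. if 0 < s then ut s v else 0" and B="g v"])
      show "0 < t" by (rule t)
      show "continuous_on {0..t} (\<lambda>s. u s v)"
        using elim(1) by (rule continuous_on_subset) auto
      show "((\<lambda>s. u s v) has_real_derivative (if 0 < s then ut s v else 0)) (at s)" if "s \<in> {0<..<t}" for s
        using elim(2) that by auto
      show "\<bar>if 0 < s then ut s v else 0\<bar> \<le> g v" if "s \<in> {0..t}" for s
        using elim(3) that gv by auto
      show "(\<lambda>s. u s v) \<in> borel_measurable borel" by measurable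
      show "(\<lambda>s. if 0 < s then ut s v else 0) \<in> borel_measurable borel" by measurable
      show "u 0 v \<le> 0" by (rule elim(4))
    qed
    also have "\<dots> = (\<integral>s. F s v \<partial>lborel)"
      by (rule Bochner_Integration.integral_cong) (auto simp: F_def indicator_def)
    finally show ?case .
  qed
  have intFs: "integrable lborel (F s)" for s
  proof (cases "s \<in> {0<..t}")
    case True
    show ?thesis
    proof (rule Bochner_Integration.integrable_bound[OF ig mFs])
      show "AE v in lborel. norm (F s v) \<le> norm (g v)"
        using gb
      proof eventually_elim
        case (elim v)
        then have "\<bar>F s v\<bar> \<le> g v" using True by (auto simp: F_def)
        then show ?case by simp
      qed
    qed
  next
    case False
    then have "F s = (\<lambda>_. 0)" by (auto simp: F_def fun_eq_iff)
    then show ?thesis by simp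
  qed
  have intF: "integrable (lborel \<Otimes>\<^sub>M lborel) (\<lambda>(s, v). F s v)"
  proof (rule pair_sigma_finite.Fubini_integrable[OF PSF])
    show "(\<lambda>(s, v). F s v) \<in> borel_measurable (lborel \<Otimes>\<^sub>M lborel)" by (rule mF)
    show "AE s in lborel. integrable lborel (\<lambda>v. case (s, v) of (s, v) \<Rightarrow> F s v)"
      using intFs by simp
    define W where "W s = indicator {0..t} s * (\<integral>v. g v \<partial>lborel)" for s
    have iW: "integrable lborel W"
      using borel_integrable_atLeastAtMost'[of 0 t "\<lambda>_. (\<integral>v. g v \<partial>lborel)"]
      unfolding W_def set_integrable_def by (simp add: mult.commute)
    show "integrable lborel (\<lambda>s. \<integral>v. norm (case (s, v) of (s, v) \<Rightarrow> F s v) \<partial>lborel)"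
    proof (rule Bochner_Integration.integrable_bound[OF iW])
      show "(\<lambda>s. \<integral>v. norm (case (s, v) of (s, v) \<Rightarrow> F s v) \<partial>lborel) \<in> borel_measurable lborel"
        by measurable
      show "AE s in lborel. norm (\<integral>v. norm (case (s, v) of (s, v) \<Rightarrow> F s v) \<partial>lborel) \<le> norm (W s)"
      proof (intro AE_I2)
        fix s
        have nn: "0 \<le> (\<integral>v. norm (F s v) \<partial>lborel)" by simp
        show "norm (\<integral>v. norm (case (s, v) of (s, v) \<Rightarrow> F s v) \<partial>lborel) \<le> norm (W s)"
        proof (cases "s \<in> {0<..t}")
          case True
          have "(\<integral>v. norm (F s v) \<partial>lborel) \<le> (\<integral>v. g v \<partial>lborel)"
          proof (rule integral_mono_AE)
            show "integrable lborel (\<lambda>v. norm (F s v))" using intFs by simp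
            show "integrable lborel g" by (rule ig)
            show "AE v in lborel. norm (F s v) \<le> g v"
              using gb by eventually_elim (use True in \<open>auto simp: F_def\<close>)
          qed
          then show ?thesis using True nn by (simp add: W_def)
        next
          case False
          then have "F s = (\<lambda>_. 0)" by (auto simp: F_def fun_eq_iff)
          then show ?thesis by simp
        qed
      qed
    qed
  qed
  have slice: "(\<integral>v. F s v \<partial>lborel) \<le> 0" for s
  proof (cases "s \<in> {0<..t}")
    case True
    then have s: "0 < s" "s \<le> t" by auto
    have [measurable]: "q s \<in> borel_measurable lborel"
      using meas_q by (simp add: borel_prod[symmetric]) measurable
    have iq: "integrable lborel (q s)" using Q s unfolding is_Q_def by blast
    have iqi: "integrable lborel (\<lambda>v. q s v * indicator {v. 0 < u s v} v)"
      using integrable_mult_indicator[OF _ iq, of "{v. 0 < u s v}"]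
      by (simp add: mult.commute)
    have "(\<integral>v. F s v \<partial>lborel) \<le> (\<integral>v. q s v * indicator {v. 0 < u s v} v \<partial>lborel)"
    proof (rule integral_mono_AE[OF intFs iqi])
      show "AE v in lborel. F s v \<le> q s v * indicator {v. 0 < u s v} v"
        using outer[rule_format, OF s(1)] inner[rule_format, OF s(1)]
      proof eventually_elim
        case (elim v)
        show ?case
        proof (cases "0 < u s v")
          case True
          then have "R < norm v" using elim(2) by force
          then show ?thesis using elim(1) True s by (auto simp: F_def)
        qed (auto simp: F_def)
      qed
    qed
    also have "\<dots> \<le> 0"
    proof (rule Q_indicator_nonpos)
      show "is_Q \<alpha> (f s) (u s) (q s)" using Q s by blast
      show "AE v in lborel. 0 \<le> f s v" using f_nonneg s by blast
      show "u s \<in> borel_measurable borel" by measurable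
    qed
    finally show ?thesis .
  next
    case False
    then have "F s = (\<lambda>_. 0)" by (auto simp: F_def fun_eq_iff)
    then show ?thesis by simp
  qed
  have mI: "(\<lambda>v. \<integral>s. F s v \<partial>lborel) \<in> borel_measurable lborel" by measurable
  have mP: "(\<lambda>v. max 0 (u t v)) \<in> borel_measurable lborel" by measurable
  have intP: "integrable lborel (\<lambda>v. max 0 (u t v))"
    using pair_sigma_finite.integrable_snd[OF PSF intF] integrable_cong_AE[OF mP mI step1] by simp
  have "(\<integral>v. max 0 (u t v) \<partial>lborel) = (\<integral>v. (\<integral>s. F s v \<partial>lborel) \<partial>lborel)"
    by (rule integral_cong_AE[OF mP mI step1])
  also have "\<dots> = (\<integral>s. (\<integral>v. F s v \<partial>lborel) \<partial>lborel)"
    by (rule pair_sigma_finite.Fubini_integral[OF PSF intF])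
  also have "\<dots> \<le> 0"
    by (rule int_nonpos_AE) (use slice in auto)
  finally have le: "(\<integral>v. max 0 (u t v) \<partial>lborel) \<le> 0" .
  have ge: "0 \<le> (\<integral>v. max 0 (u t v) \<partial>lborel)" by simp
  have "AE v in lborel. max 0 (u t v) = 0"
    using integral_nonneg_eq_0_iff_AE[OF intP] le ge by simp
  then show "AE v in lborel. u t v \<le> 0"
    by eventually_elim simp
qed

end
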